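(* Let $P$ be an integer and $m\ge 0$ an integer. Consider the equation $$\sigma_2(n)-n^2=V_{2m}(P,-1)\,n-U_{2m}(P,-1)^2+1$$ in positive integers $n$. Then every solution $n$ with $n>\big(|V_{2m}(P,-1)|+U_{2m}(P,-1)^2-1\big)^3$ is of one of the following forms (so all solutions not of these forms lie in the finite, computable range $n\le(|V_{2m}(P,-1)|+U_{2m}(P,-1)^2-1)^3$): (1) $n=U_{2k+1}(P,-1)\,U_{2k+2m+1}(P,-1)$ for some integer $k\ge 0$, with $U_{2k+1}(P,-1)$ and $U_{2k+2m+1}(P,-1)$ both prime; (2) $n=U_{2k+1}(P,-1)\,U_{2m-2k-1}(P,-1)$ for some integer $k$ with $0\le k\le m-1$ and $m\ne 2k+1$, with $U_{2k+1}(P,-1)$ and $U_{2m-2k-1}(P,-1)$ both prime.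
   Context: For a positive integer $n$ and $k\ge 0$, $\sigma_k(n)=\sum_{d\mid n,\ d>0} d^k$. For integers $P,Q$, the Lucas sequences are defined for $j\ge 0$ by $U_0(P,Q)=0$, $U_1(P,Q)=1$, $U_j(P,Q)=P\,U_{j-1}(P,Q)-Q\,U_{j-2}(P,Q)$ for $j>1$, and $V_0(P,Q)=2$, $V_1(P,Q)=P$, $V_j(P,Q)=P\,V_{j-1}(P,Q)-Q\,V_{j-2}(P,Q)$ for $j>1$. *)

theory Defs
  imports "HOL-Computational_Algebra.Primes"
begin

definition divisor_sigma :: "nat \<Rightarrow> nat \<Rightarrow> nat" where
  "divisor_sigma k n = (\<Sum>d\<in>{d. d dvd n}. d ^ k)"

fun lucasU :: "int \<Rightarrow> int \<Rightarrow> nat \<Rightarrow> int" where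
  "lucasU P Q 0 = 0"
| "lucasU P Q (Suc 0) = 1"
| "lucasU P Q (Suc (Suc j)) = P * lucasU P Q (Suc j) - Q * lucasU P Q j"

fun lucasV :: "int \<Rightarrow> int \<Rightarrow> nat \<Rightarrow> int" where
  "lucasV P Q 0 = 2"
| "lucasV P Q (Suc 0) = P"
| "lucasV P Q (Suc (Suc j)) = P * lucasV P Q (Suc j) - Q * lucasV P Q j"

end

theory Submission
  imports Defs
begin


lemma luc_step:
  "2 * lucasU P (-1) (Suc j) = P * lucasU P (-1) j + lucasV P (-1) j \<and>
   2 * lucasV P (-1) (Suc j) = P * lucasV P (-1) j + (P^2+4) * lucasU P (-1) j"
proof (induction j)
  case 0 then show ?case by (simp add: algebra_simps power2_eq_square)
next
  case (Suc i)
  define x where "x = lucasU P (-1) i"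
  define y where "y = lucasV P (-1) i"
  define X where "X = lucasU P (-1) (Suc i)"
  define Y where "Y = lucasV P (-1) (Suc i)"
  have ih: "2 * X = P * x + y" "2 * Y = P * y + (P^2+4) * x"
    using Suc unfolding x_def y_def X_def Y_def by auto
  have u2: "lucasU P (-1) (Suc (Suc i)) = P * X + x" unfolding x_def X_def by simp
  have v2: "lucasV P (-1) (Suc (Suc i)) = P * Y + y" unfolding y_def Y_def by simp
  have a: "2 * (2 * (P * X + x)) = 2 * (P * X + Y)"
  proof -
    have "2 * (2 * (P * X + x)) = 2 * P * (2 * X) + 4 * x" by (simp add: algebra_simps)
    also have "\<dots> = 2 * P * (P * x + y) + 4 * x" using ih by simp
    also have "\<dots> = P * (P * x + y) + (P * y + (P^2+4) * x)" by (simp add: algebra_simps power2_eq_square)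
    also have "\<dots> = P * (2 * X) + 2 * Y" using ih by simp
    finally show ?thesis by (simp add: algebra_simps)
  qed
  have b: "2 * (2 * (P * Y + y)) = 2 * (P * Y + (P^2+4) * X)"
  proof -
    have "2 * (2 * (P * Y + y)) = 2 * P * (2 * Y) + 4 * y" by (simp add: algebra_simps)
    also have "\<dots> = 2 * P * (P * y + (P^2+4) * x) + 4 * y" using ih by simp
    also have "\<dots> = P * (P * y + (P^2+4) * x) + (P^2+4) * (P * x + y)" by (simp add: algebra_simps power2_eq_square)
    also have "\<dots> = P * (2 * Y) + (P^2+4) * (2 * X)" using ih by simp
    finally show ?thesis by (simp add: algebra_simps)
  qed
  show ?case unfolding u2 v2 X_def[symmetric] Y_def[symmetric] using a b by simp
qed

lemma luc_norm:
  "(lucasV P (-1) j)^2 - (P^2+4) * (lucasU P (-1) j)^2 = 4 * (-1)^j"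
proof (induction j)
  case 0 then show ?case by simp
next
  case (Suc j)
  have s: "2 * lucasU P (-1) (Suc j) = P * lucasU P (-1) j + lucasV P (-1) j"
    "2 * lucasV P (-1) (Suc j) = P * lucasV P (-1) j + (P^2+4) * lucasU P (-1) j"
    using luc_step by blast+
  have "4 * ((lucasV P (-1) (Suc j))^2 - (P^2+4) * (lucasU P (-1) (Suc j))^2)
     = (2*lucasV P (-1) (Suc j))^2 - (P^2+4) * (2*lucasU P (-1) (Suc j))^2"
    by (simp add: algebra_simps power2_eq_square)
  also have "\<dots> = -4 * ((lucasV P (-1) j)^2 - (P^2+4) * (lucasU P (-1) j)^2)"
    unfolding s by (simp add: algebra_simps power2_eq_square)
  finally show ?case using Suc by simp
qed

lemma luc_add:
  "2 * lucasU P (-1) (a+b) = lucasU P (-1) a * lucasV P (-1) b + lucasU P (-1) b * lucasV P (-1) a \<and>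
   2 * lucasV P (-1) (a+b) = lucasV P (-1) a * lucasV P (-1) b + (P^2+4) * lucasU P (-1) a * lucasU P (-1) b"
proof -
  have "(2 * lucasU P (-1) (a+b) = lucasU P (-1) a * lucasV P (-1) b + lucasU P (-1) b * lucasV P (-1) a \<and>
   2 * lucasV P (-1) (a+b) = lucasV P (-1) a * lucasV P (-1) b + (P^2+4) * lucasU P (-1) a * lucasU P (-1) b) \<and>
   (2 * lucasU P (-1) (a+Suc b) = lucasU P (-1) a * lucasV P (-1) (Suc b) + lucasU P (-1) (Suc b) * lucasV P (-1) a \<and>
   2 * lucasV P (-1) (a+Suc b) = lucasV P (-1) a * lucasV P (-1) (Suc b) + (P^2+4) * lucasU P (-1) a * lucasU P (-1) (Suc b))"
  proof (induction b)
    case 0 then show ?case using luc_step[of P a] by (simp add: algebra_simps)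
  next
    case (Suc b)
    have e: "a + Suc (Suc b) = Suc (Suc (a+b))" by simp
    show ?case using Suc unfolding e by (simp add: algebra_simps)
  qed
  then show ?thesis by blast
qed

lemma luc_sub:
  assumes "b \<le> a"
  shows "2 * (-1)^b * lucasU P (-1) (a-b) = lucasU P (-1) a * lucasV P (-1) b - lucasU P (-1) b * lucasV P (-1) a"
proof -
  define c where "c = a - b"
  have a: "a = c + b" using assms c_def by simp
  have h1: "2 * lucasU P (-1) a = lucasU P (-1) c * lucasV P (-1) b + lucasU P (-1) b * lucasV P (-1) c"
   and h2: "2 * lucasV P (-1) a = lucasV P (-1) c * lucasV P (-1) b + (P^2+4) * lucasU P (-1) c * lucasU P (-1) b"
    using luc_add[of P c b] a by auto
  have n: "(lucasV P (-1) b)^2 - (P^2+4) * (lucasU P (-1) b)^2 = 4 * (-1)^b" by (rule luc_norm)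
  have "2 * (lucasU P (-1) a * lucasV P (-1) b - lucasU P (-1) b * lucasV P (-1) a)
     = (2 * lucasU P (-1) a) * lucasV P (-1) b - lucasU P (-1) b * (2 * lucasV P (-1) a)" by (simp add: algebra_simps)
  also have "\<dots> = lucasU P (-1) c * ((lucasV P (-1) b)^2 - (P^2+4) * (lucasU P (-1) b)^2)"
    unfolding h1 h2 by (simp add: algebra_simps power2_eq_square)
  also have "\<dots> = 2 * (2 * (-1)^b * lucasU P (-1) c)" unfolding n by simp
  finally show ?thesis unfolding c_def by simp
qed

lemma luc_neg:
  "lucasU (-P) (-1) j = (-1)^(j+1) * lucasU P (-1) j \<and> lucasV (-P) (-1) j = (-1)^j * lucasV P (-1) j"
proof -
  have "(lucasU (-P) (-1) j = (-1)^(j+1) * lucasU P (-1) j \<and> lucasV (-P) (-1) j = (-1)^j * lucasV P (-1) j) \<and>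
    (lucasU (-P) (-1) (Suc j) = (-1)^(j+2) * lucasU P (-1) (Suc j) \<and> lucasV (-P) (-1) (Suc j) = (-1)^(j+1) * lucasV P (-1) (Suc j))"
    by (induction j) (auto simp: algebra_simps)
  then show ?thesis by blast
qed

lemma luc_nonneg:
  assumes "P \<ge> 0"
  shows "lucasU P (-1) j \<ge> 0 \<and> lucasV P (-1) j \<ge> 0"
proof -
  have "(lucasU P (-1) j \<ge> 0 \<and> lucasV P (-1) j \<ge> 0) \<and> (lucasU P (-1) (Suc j) \<ge> 0 \<and> lucasV P (-1) (Suc j) \<ge> 0)"
    by (induction j) (use assms in auto)
  then show ?thesis by blast
qed

lemma lucV_even_ge2:
  assumes "P \<ge> 0"
  shows "lucasV P (-1) (2*m) \<ge> 2"
proof (induction m)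
  case 0 then show ?case by simp
next
  case (Suc m)
  have e: "2 * Suc m = Suc (Suc (2*m))" by simp
  have "P * lucasV P (-1) (Suc (2*m)) \<ge> 0" using luc_nonneg[OF assms] assms by simp
  then show ?case unfolding e using Suc by simp
qed

lemma lucU_P0:
  "lucasU 0 (-1) (2*m) = 0"
proof (induction m)
  case 0 then show ?case by simp
next
  case (Suc m)
  have e: "2 * Suc m = Suc (Suc (2*m))" by simp
  show ?case unfolding e using Suc by simp
qed



lemma pell_x1:
  fixes P z :: int
  assumes "P \<ge> 1" "z \<ge> 0" "z^2 = P^2 + 8"
  shows "P = 1 \<and> z = 3"
proof -
  have "P^2 < z^2" using assms by simp
  then have "P < z" using assms power_less_imp_less_base by fastforce
  show ?thesis
  proof (cases "z = P + 1")
    case True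
    then have "2*P + 1 = 8" using assms by (simp add: power2_eq_square algebra_simps)
    then show ?thesis by presburger
  next
    case False
    then have "z \<ge> P + 2" using \<open>P < z\<close> by simp
    then have "(P+2)^2 \<le> z^2" using assms power_mono[of "P+2" z 2] by linarith
    then have "P \<le> 1" using assms by (simp add: power2_eq_square algebra_simps)
    then have "P = 1" using assms by simp
    then have "z^2 = 3^2" using assms by simp
    then have "z = 3" using assms power2_eq_imp_eq[of z 3] by linarith
    then show ?thesis using \<open>P = 1\<close> by simp
  qed
qed

lemma pell:
  fixes P :: int
  assumes P: "P \<ge> 1"
  shows "\<And>z. z \<ge> 0 \<Longrightarrow> (z^2 - (P^2+4) * (int x)^2 = 4 \<or> z^2 - (P^2+4) * (int x)^2 = -4)
     \<Longrightarrow> \<exists>j. z = lucasV P (-1) j \<and> int x = lucasU P (-1) j"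
proof (induction x rule: less_induct)
  case (less x z)
  define D where "D = P^2 + 4"
  define e where "e = z^2 - D * (int x)^2"
  have e: "e = 4 \<or> e = -4" using less.prems unfolding e_def D_def by auto
  show ?case
  proof (cases "x = 0")
    case True
    have h: "z^2 = 4 \<or> z^2 = -4" using less.prems True by simp
    have "z^2 \<noteq> -4" using zero_le_power2[of z] by linarith
    then have "z^2 = 2^2" using h by simp
    then have "z = 2" using less.prems power2_eq_imp_eq[of z 2] by linarith
    then show ?thesis using True by (intro exI[of _ 0]) simp
  next
    case x0: False
    show ?thesis
    proof (cases "x = 1")
      case True
      then have "z^2 = P^2 \<or> z^2 = P^2 + 8" using less.prems by auto
      then show ?thesis
      proof
        assume "z^2 = P^2"
        then have "z = P" using less.prems P power2_eq_imp_eq[of z P] by linarith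
        then show ?thesis using True by (intro exI[of _ 1]) simp
      next
        assume "z^2 = P^2 + 8"
        then have "P = 1 \<and> z = 3" using pell_x1 P less.prems by blast
        then show ?thesis using True by (intro exI[of _ 2]) (simp add: numeral_2_eq_2)
      qed
    next
      case False
      then have x2: "x \<ge> 2" using x0 by simp
      have xi: "int x \<ge> 2" using x2 by simp
      have x4: "(int x)^2 \<ge> 4" using power_mono[OF xi, of 2] by simp
      have zsq: "z^2 = D * (int x)^2 + e" unfolding e_def by simp
      have ev1: "even (z - P * int x)"
      proof (rule ccontr)
        assume "odd (z - P * int x)"
        moreover have "z + P * int x = (z - P * int x) + 2 * (P * int x)" by simp
        ultimately have "odd (z + P * int x)" by simp
        then have "odd ((z - P * int x) * (z + P * int x))" using \<open>odd (z - P * int x)\<close> by simp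
        moreover have "(z - P * int x) * (z + P * int x) = 4 * (int x)^2 + e"
          using zsq unfolding D_def by (simp add: algebra_simps power2_eq_square)
        moreover have "even (4 * (int x)^2 + e)" using e by auto
        ultimately show False by simp
      qed
      have ev2: "even (D * int x - P * z)"
      proof -
        have "D * int x - P * z = 2 * (2 * int x) - P * (z - P * int x)" unfolding D_def by (simp add: algebra_simps power2_eq_square)
        then show ?thesis using ev1 by simp
      qed
      obtain x' where x': "z - P * int x = 2 * x'" using ev1 by blast
      obtain z' where z': "D * int x - P * z = 2 * z'" using ev2 by blast
      have Dp: "D > 0" unfolding D_def using zero_le_power2[of P] by linarith
      have "(D * int x)^2 - (P * z)^2 = 4 * D * (int x)^2 - P^2 * e"
        using zsq unfolding D_def by (simp add: algebra_simps power2_eq_square)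
      moreover have "P^2 * e \<le> 4 * P^2" using e zero_le_power2[of P] by (elim disjE) simp_all
      moreover have "4 * P^2 \<le> 4 * D * (int x)^2"
      proof -
        have "P^2 \<le> D" unfolding D_def by simp
        also have "D \<le> D * (int x)^2"
        proof -
          have "(int x)^2 \<ge> 2^2" using power_mono[OF xi, of 2] by simp
          then have "1 \<le> (int x)^2" by simp
          then show ?thesis using Dp mult_left_mono[of 1 "(int x)^2" D] by simp
        qed
        finally show ?thesis by simp
      qed
      ultimately have "(P * z)^2 \<le> (D * int x)^2" by linarith
      then have "P * z \<le> D * int x" using Dp power2_le_imp_le[of "P*z" "D * int x"] by simp
      then have z'0: "z' \<ge> 0" using z' by simp
      have "z^2 - (P * int x)^2 = 4 * (int x)^2 + e" using zsq unfolding D_def by (simp add: algebra_simps power2_eq_square)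
      moreover have "4 * (int x)^2 + e \<ge> 0" using e x4 by (elim disjE) linarith+
      ultimately have "(P * int x)^2 \<le> z^2" by simp
      then have "P * int x \<le> z" using less.prems P power2_le_imp_le[of "P * int x" z] by simp
      then have x'0: "x' \<ge> 0" using x' by simp
      have "((P+2) * int x)^2 - z^2 = 4 * P * (int x)^2 - e" using zsq unfolding D_def by (simp add: algebra_simps power2_eq_square)
      moreover have "4 * P * (int x)^2 \<ge> 16"
      proof -
        have "(int x)^2 \<ge> 2^2" using power_mono[OF xi, of 2] by simp
        then have "P * (int x)^2 \<ge> 1 * 4" using P mult_mono[of 1 P 4 "(int x)^2"] by simp
        then show ?thesis by simp
      qed
      ultimately have "z^2 < ((P+2) * int x)^2" using e by (elim disjE) linarith+
      then have "z < (P+2) * int x" using P power_less_imp_less_base[of z 2 "(P+2) * int x"] by simp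
      moreover have "(P+2)*int x = P*int x + 2*int x" by (simp add: algebra_simps)
      ultimately have "x' < int x" using x' by linarith
      then have lt: "nat x' < x" using x'0 by simp
      have "4 * (z'^2 - D * x'^2) = (2*z')^2 - D * (2*x')^2" by (simp add: algebra_simps power2_eq_square)
      also have "\<dots> = (D * int x - P * z)^2 - D * (z - P * int x)^2" unfolding x' z' ..
      also have "\<dots> = 4 * (D * (int x)^2 - z^2)" unfolding D_def by (simp add: algebra_simps power2_eq_square)
      finally have "z'^2 - D * (int (nat x'))^2 = - e" unfolding e_def using x'0 by simp
      then have "z'^2 - (P^2+4) * (int (nat x'))^2 = 4 \<or> z'^2 - (P^2+4) * (int (nat x'))^2 = -4"
        using e unfolding D_def by auto
      then obtain j where j: "z' = lucasV P (-1) j" "int (nat x') = lucasU P (-1) j"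
        using less.IH[OF lt z'0] by blast
      have st: "2 * lucasU P (-1) (Suc j) = P * lucasU P (-1) j + lucasV P (-1) j"
        "2 * lucasV P (-1) (Suc j) = P * lucasV P (-1) j + (P^2+4) * lucasU P (-1) j"
        using luc_step by blast+
      have "2 * lucasU P (-1) (Suc j) = P * x' + z'" using st j x'0 by simp
      also have "\<dots> = 2 * int x"
      proof -
        have "2 * (P * x' + z') = P * (2 * x') + 2 * z'" by (simp add: algebra_simps)
        also have "\<dots> = P * (z - P * int x) + (D * int x - P * z)" unfolding x' z' ..
        also have "\<dots> = 2 * (2 * int x)" unfolding D_def by (simp add: algebra_simps power2_eq_square)
        finally show ?thesis by simp
      qed
      finally have hx: "int x = lucasU P (-1) (Suc j)" by simp
      have "2 * lucasV P (-1) (Suc j) = P * z' + D * x'" using st j x'0 unfolding D_def by simp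
      also have "4 * (P * z' + D * x') = 4 * (2 * z)"
      proof -
        have "4 * (P * z' + D * x') = 2 * (P * (2 * z') + D * (2 * x'))" by (simp add: algebra_simps)
        also have "\<dots> = 2 * (P * (D * int x - P * z) + D * (z - P * int x))" unfolding x' z' ..
        also have "\<dots> = 4 * (2 * z)" unfolding D_def by (simp add: algebra_simps power2_eq_square)
        finally show ?thesis .
      qed
      then have "P * z' + D * x' = 2 * z" by simp
      finally have hz: "z = lucasV P (-1) (Suc j)" by simp
      show ?thesis using hx hz by blast
    qed
  qed
qed



lemma ds_lower:
  assumes "n > 0" "A \<subseteq> {d. d dvd n}"
  shows "(\<Sum>d\<in>A. d^2) \<le> divisor_sigma 2 n"
  unfolding divisor_sigma_def using assms
  by (intro sum_mono2) auto

lemma ds_prime: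
  assumes "prime p"
  shows "divisor_sigma 2 p = 1 + p^2"
proof -
  have "{d. d dvd p} = {1, p}" using assms unfolding prime_nat_iff by auto
  moreover have "p \<noteq> 1" using assms by auto
  ultimately show ?thesis unfolding divisor_sigma_def by simp
qed

lemma ds_pq:
  fixes p q :: nat
  assumes "prime p" "prime q"
  shows "{d. d dvd p*q} = {1, p, q, p*q}"
proof
  show "{d. d dvd p*q} \<subseteq> {1, p, q, p*q}"
  proof
    fix d assume "d \<in> {d. d dvd p*q}"
    then have "d dvd p*q" by simp
    then have "\<exists>r s. d = r*s \<and> r dvd p \<and> s dvd q" by (rule division_decomp)
    then obtain r s where "d = r*s" "r dvd p" "s dvd q" by blast
    moreover have "r = 1 \<or> r = p" using \<open>r dvd p\<close> prime_nat_iff[THEN iffD1, OF assms(1)] by auto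
    moreover have "s = 1 \<or> s = q" using \<open>s dvd q\<close> prime_nat_iff[THEN iffD1, OF assms(2)] by auto
    ultimately show "d \<in> {1, p, q, p*q}" by auto
  qed
qed auto

lemma ds_pq_sum:
  assumes "prime p" "prime q" "p < q"
  shows "divisor_sigma 2 (p*q) = 1 + p^2 + q^2 + (p*q)^2"
proof -
  have p1: "p > 1" "q > 1" using assms prime_gt_1_nat by auto
  have "p < p*q" "q < p*q" using p1 by auto
  then have "p*q \<noteq> 1" "p*q \<noteq> p" "p*q \<noteq> q" "p \<noteq> 1" "q \<noteq> 1" "p \<noteq> q" using p1 assms by auto
  then show ?thesis unfolding divisor_sigma_def ds_pq[OF assms(1,2)] by (simp add: algebra_simps)
qed

lemma ds_pp_sum:
  assumes "prime p"
  shows "divisor_sigma 2 (p*p) = 1 + p^2 + (p*p)^2"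
proof -
  have p1: "p > 1" using assms prime_gt_1_nat by auto
  have "p < p*p" using p1 by auto
  then have "p*p \<noteq> 1" "p*p \<noteq> p" "p \<noteq> 1" using p1 by auto
  then show ?thesis unfolding divisor_sigma_def ds_pq[OF assms assms] by (simp add: algebra_simps)
qed

lemma odd_neg:
  "odd i \<Longrightarrow> lucasU (-P) (-1) i = lucasU P (-1) i"
  using luc_neg[of P i] by simp

lemma even_neg:
  "even i \<Longrightarrow> lucasV (-P) (-1) i = lucasV P (-1) i \<and> (lucasU (-P) (-1) i)^2 = (lucasU P (-1) i)^2"
  using luc_neg[of P i] by (simp add: power_mult_distrib)

lemma fin:
  fixes P :: int and m a b :: nat
  assumes P0: "P \<ge> 0" and U0: "lucasU P (-1) (2*m) \<noteq> 0"
    and ab: "a < b"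
    and eq: "int a^2 + int b^2 = lucasV P (-1) (2*m) * int a * int b - (lucasU P (-1) (2*m))^2"
  shows "(\<exists>k. (int a = lucasU P (-1) (2*k+1) \<and> int b = lucasU P (-1) (2*k+2*m+1))
            \<or> (int b = lucasU P (-1) (2*k+1) \<and> int a = lucasU P (-1) (2*k+2*m+1)))
       \<or> (\<exists>k. k \<le> m - 1 \<and> m \<ge> 1 \<and> m \<noteq> 2*k+1
            \<and> int a = lucasU P (-1) (2*k+1) \<and> int b = lucasU P (-1) (2*m-2*k-1))"
proof -
  define V where "V = lucasV P (-1) (2*m)"
  define U where "U = lucasU P (-1) (2*m)"
  define D where "D = P^2 + 4"
  have P1: "P \<ge> 1"
  proof (rule ccontr)
    assume "\<not> P \<ge> 1"
    then have "P = 0" using P0 by simp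
    then show False using U0 lucU_P0[of m] by simp
  qed
  have U0': "U \<noteq> 0" using U0 U_def by simp
  have norm: "V^2 - D * U^2 = 4" using luc_norm[of P "2*m"] unfolding V_def U_def D_def by simp
  have eq': "int a^2 + int b^2 = V * int a * int b - U^2" using eq unfolding V_def U_def .
  define w where "w = 2 * int b - V * int a"
  have "w^2 = 4*(int a^2 + int b^2 - V * int a * int b) + (V^2 - 4) * int a^2"
    unfolding w_def by (simp add: algebra_simps power2_eq_square)
  also have "\<dots> = U^2 * (D * int a^2 - 4)" using eq' norm by (simp add: algebra_simps)
  finally have w2: "w^2 = U^2 * (D * int a^2 - 4)" .
  then have "U^2 dvd w^2" by simp
  then have "U dvd w" by simp
  then obtain z where z: "w = U * z" by blast
  have "U^2 * z^2 = U^2 * (D * int a^2 - 4)" using w2 z by (simp add: power_mult_distrib)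
  then have z2: "z^2 = D * int a^2 - 4" using U0' by simp
  have "\<bar>z\<bar>^2 - (P^2+4) * (int a)^2 = -4" using z2 unfolding D_def by simp
  then obtain j where j: "\<bar>z\<bar> = lucasV P (-1) j" "int a = lucasU P (-1) j"
    using pell[OF P1, of "\<bar>z\<bar>" a] by auto
  have "(lucasV P (-1) j)^2 - (P^2+4) * (lucasU P (-1) j)^2 = 4 * (-1)^j" by (rule luc_norm)
  moreover have "(lucasV P (-1) j)^2 = z^2" using j(1) by (metis power2_abs)
  ultimately have "4 * (-1::int)^j = -4" using j z2 unfolding D_def by simp
  then have "(-1::int)^j = -1" by simp
  then have oj: "odd j" by (metis neg_one_even_power one_neq_neg_one)
  then obtain k where k: "j = 2*k+1" using oddE by blast
  have b2: "2 * int b = V * int a + U * z" using w_def z by simp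
  have add: "2 * lucasU P (-1) (j + 2*m) = lucasU P (-1) j * V + U * lucasV P (-1) j"
    using luc_add[of P j "2*m"] unfolding V_def U_def by simp
  show ?thesis
  proof (cases "z \<ge> 0")
    case True
    then have "z = lucasV P (-1) j" using j by simp
    then have "2 * lucasU P (-1) (j + 2*m) = 2 * int b" using add b2 j by (simp add: algebra_simps)
    then have "int b = lucasU P (-1) (2*k+2*m+1)" using k by (simp add: algebra_simps)
    then show ?thesis using j k by blast
  next
    case False
    then have zj: "z = - lucasV P (-1) j" using j by simp
    show ?thesis
    proof (cases "2*m \<le> j")
      case True
      have "2 * (-1)^(2*m) * lucasU P (-1) (j - 2*m) = lucasU P (-1) j * V - U * lucasV P (-1) j"
        using luc_sub[OF True, of P] unfolding V_def U_def by simp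
      then have "2 * lucasU P (-1) (j - 2*m) = 2 * int b" using b2 zj j by (simp add: algebra_simps)
      then have hb: "int b = lucasU P (-1) (j - 2*m)" by simp
      have km: "m \<le> k" using True k by simp
      have "j - 2*m = 2*(k-m)+1" "j = 2*(k-m)+2*m+1" using k km by auto
      then show ?thesis using hb j by metis
    next
      case False
      then have jl: "j \<le> 2*m" by simp
      have "2 * (-1)^j * lucasU P (-1) (2*m - j) = U * lucasV P (-1) j - lucasU P (-1) j * V"
        using luc_sub[OF jl, of P] unfolding V_def U_def by simp
      then have "- 2 * lucasU P (-1) (2*m - j) = - (2 * int b)"
        using b2 zj j \<open>(-1::int)^j = -1\<close> by (simp add: algebra_simps)
      then have hb: "int b = lucasU P (-1) (2*m - j)" by simp
      have km: "k \<le> m - 1" "m \<ge> 1" using False k by auto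
      have "m \<noteq> 2*k+1"
      proof
        assume "m = 2*k+1"
        then have "2*m - j = j" using k by simp
        then show False using hb j ab by simp
      qed
      moreover have "2*m - j = 2*m-2*k-1" using k by simp
      ultimately show ?thesis using hb j km k by metis
    qed
  qed
qed



lemma main_pos:
  fixes P :: int and m n :: nat
  assumes P0: "P \<ge> 0"
    and "n > 0"
    and hyp: "int (divisor_sigma 2 n) - int n ^ 2
           = lucasV P (-1) (2*m) * int n - (lucasU P (-1) (2*m))^2 + 1"
    and big: "int n > (\<bar>lucasV P (-1) (2*m)\<bar> + (lucasU P (-1) (2*m))^2 - 1) ^ 3"
  shows "(\<exists>k::nat. int n = lucasU P (-1) (2*k+1) * lucasU P (-1) (2*k+2*m+1)
            \<and> prime (lucasU P (-1) (2*k+1)) \<and> prime (lucasU P (-1) (2*k+2*m+1)))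
       \<or> (\<exists>k::nat. k \<le> m - 1 \<and> m \<ge> 1 \<and> m \<noteq> 2*k+1
            \<and> int n = lucasU P (-1) (2*k+1) * lucasU P (-1) (2*m-2*k-1)
            \<and> prime (lucasU P (-1) (2*k+1)) \<and> prime (lucasU P (-1) (2*m-2*k-1)))"
proof -
  define V where "V = lucasV P (-1) (2*m)"
  define U where "U = lucasU P (-1) (2*m)"
  define T where "T = V + U^2 - 1"
  have V2: "V \<ge> 2" unfolding V_def by (rule lucV_even_ge2[OF P0])
  have norm: "V^2 - (P^2+4) * U^2 = 4" using luc_norm[of P "2*m"] unfolding V_def U_def by simp
  have U2: "U^2 \<ge> 0" by simp
  have T1: "T \<ge> 1" unfolding T_def using V2 U2 by linarith
  have bigT: "int n > T^3" using big V2 unfolding T_def V_def U_def by simp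
  have T3: "T \<le> T^3" using power_increasing[of 1 3 T] T1 by simp
  have sig: "int (divisor_sigma 2 n) = int n^2 + V * int n - U^2 + 1" using hyp unfolding V_def U_def by simp
  have n2: "n \<ge> 2" using bigT T1 T3 by linarith
  define a where "a = (LEAST d. 1 < d \<and> d dvd n)"
  have aex: "1 < n \<and> n dvd n" using n2 by simp
  have ha: "1 < a" "a dvd n" using LeastI[of "\<lambda>d. 1 < d \<and> d dvd n", OF aex] unfolding a_def by auto
  have amin: "\<And>d. 1 < d \<Longrightarrow> d dvd n \<Longrightarrow> a \<le> d" unfolding a_def by (rule Least_le) simp
  have pa: "prime a" unfolding prime_nat_iff
  proof (intro conjI allI impI)
    show "1 < a" by (rule ha(1))
    fix c assume "c dvd a"
    then have "c > 0" "c \<le> a" using ha by (auto intro: dvd_imp_le) (metis dvd_0_left_iff not_less0 ha(1) gr_zeroI)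
    show "c = 1 \<or> c = a"
    proof (cases "c = 1")
      case False
      then have "1 < c" using \<open>c > 0\<close> by simp
      moreover have "c dvd n" using \<open>c dvd a\<close> ha(2) by (rule dvd_trans)
      ultimately have "a \<le> c" by (rule amin)
      then show ?thesis using \<open>c \<le> a\<close> by simp
    qed simp
  qed
  show ?thesis
  proof (cases "prime n")
    case True
    then have "int (divisor_sigma 2 n) = 1 + int n^2" using ds_prime by simp
    then have "V * int n = U^2" using sig by simp
    moreover have "V * int n \<ge> 2 * int n" using V2 by (simp add: mult_right_mono)
    moreover have "U^2 < T" unfolding T_def using V2 by simp
    ultimately show ?thesis using bigT T3 by linarith
  next
    case np: False
    then obtain d where d: "d dvd n" "d \<noteq> 1" "d \<noteq> n" using n2 unfolding prime_nat_iff by auto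
    have "d > 0" using d \<open>n > 0\<close> by (metis dvd_0_left_iff gr_zeroI less_numeral_extra(3))
    then have "1 < d" using d by simp
    have "d \<le> n" using d \<open>n > 0\<close> by (simp add: dvd_imp_le)
    have "a < n" using amin[OF \<open>1 < d\<close> d(1)] \<open>d \<le> n\<close> d(3) by simp
    define b where "b = n div a"
    have nab: "n = a * b" using ha(2) unfolding b_def by simp
    have b1: "b > 1"
    proof (rule ccontr)
      assume "\<not> b > 1"
      then have "b = 0 \<or> b = 1" by auto
      then show False using nab \<open>a < n\<close> \<open>n > 0\<close> by auto
    qed
    have bdvd: "b dvd n" using nab by simp
    have ab: "a \<le> b" using amin[OF b1 bdvd] .
    have bn: "b < n" using nab ha(1) b1 by simp
    have "{1, b, n} \<subseteq> {d. d dvd n}" using bdvd by auto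
    then have "(\<Sum>d\<in>{1, b, n}. d^2) \<le> divisor_sigma 2 n" using ds_lower \<open>n > 0\<close> by blast
    moreover have "(\<Sum>d\<in>{1, b, n}. d^2) = 1 + b^2 + n^2" using b1 bn by simp
    ultimately have "int (1 + b^2 + n^2) \<le> int (divisor_sigma 2 n)" by linarith
    then have "int b^2 \<le> V * int n - U^2" using sig by simp
    also have "\<dots> \<le> V * int n" by simp
    also have "\<dots> = (V * int a) * int b" using nab by simp
    finally have "int b * int b \<le> (V * int a) * int b" by (simp add: power2_eq_square)
    then have bVa: "int b \<le> V * int a" using b1 by simp
    have "prime b \<and> (U = 0 \<longrightarrow> a = b) \<and> (U \<noteq> 0 \<longrightarrow> T < int a)"
    proof (cases "U = 0")
      case True
      then have "V^2 = 2^2" using norm by simp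
      then have V2': "V = 2" using V2 power2_eq_imp_eq[of V 2] by simp
      have "a = b"
      proof (rule ccontr)
        assume "a \<noteq> b"
        then have alb: "a < b" using ab by simp
        have "{1, a, b, n} \<subseteq> {d. d dvd n}" using bdvd ha by auto
        then have "(\<Sum>d\<in>{1, a, b, n}. d^2) \<le> divisor_sigma 2 n" using ds_lower \<open>n > 0\<close> by blast
        moreover have "(\<Sum>d\<in>{1, a, b, n}. d^2) = 1 + a^2 + b^2 + n^2" using b1 bn alb ha by simp
        ultimately have "int (1 + a^2 + b^2 + n^2) \<le> int (divisor_sigma 2 n)" by linarith
        then have "int a^2 + int b^2 \<le> 2 * int a * int b" using sig True V2' nab by simp
        then have "(int b - int a)^2 \<le> 0" by (simp add: power2_eq_square algebra_simps)
        then have "int b = int a" by simp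
        then show False using alb by simp
      qed
      then show ?thesis using pa True by simp
    next
      case False
      have TV: "V \<le> T" unfolding T_def using False by (simp add: power2_eq_square) (smt (verit) zero_less_power2 False power2_eq_square)
      have "int a * int b \<le> int a * (V * int a)" using bVa by (simp add: mult_left_mono)
      then have "int n \<le> V * int a^2" using nab by (simp add: power2_eq_square algebra_simps)
      then have "V * T^2 < V * int a^2"
      proof -
        have "V * T^2 \<le> T * T^2" using TV by (simp add: mult_right_mono)
        also have "\<dots> = T^3" by (simp add: power2_eq_square power3_eq_cube)
        finally show ?thesis using bigT \<open>int n \<le> V * int a^2\<close> by linarith
      qed
      then have "T^2 < (int a)^2" using V2 by simp
      then have aT: "T < int a" using power_less_imp_less_base[of T 2 "int a"] by simp
      have "prime b"
      proof (rule ccontr)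
        assume "\<not> prime b"
        then obtain c where c: "c dvd b" "c \<noteq> 1" "c \<noteq> b" using b1 unfolding prime_nat_iff by auto
        define e where "e = b div c"
        have bce: "b = c * e" using c unfolding e_def by simp
        have "c > 1" using c b1 bce by (cases "c = 0") auto
        have "e > 1" using c b1 bce by (cases "e = 0"; cases "e = 1") auto
        have "c dvd n" "e dvd n" using bce nab by auto
        then have "a \<le> c" "a \<le> e" using amin \<open>c > 1\<close> \<open>e > 1\<close> by auto
        then have "a * a \<le> b" using bce by (simp add: mult_mono)
        then have "int (a * a) \<le> int b" by (simp only: of_nat_le_iff)
        then have "int a * int a \<le> V * int a" using bVa by simp
        then have "int a \<le> V" using ha by simp
        then show False using aT TV by simp
      qed
      then show ?thesis using False aT by simp
    qed
    then have pb: "prime b" and U0a: "U = 0 \<longrightarrow> a = b" and U0T: "U \<noteq> 0 \<longrightarrow> T < int a" by auto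
    show ?thesis
    proof (cases "a = b")
      case True
      have "int (divisor_sigma 2 n) = 1 + int a^2 + int a^4" using ds_pp_sum[OF pa] nab True
        by (simp add: power2_eq_square power4_eq_xxxx)
      then have e1: "(V - 1) * int a^2 = U^2" using sig nab True by (simp add: algebra_simps power2_eq_square power4_eq_xxxx)
      have "1 * int a^2 \<le> (V - 1) * int a^2" using V2 by (intro mult_right_mono) auto
      then have "int a^2 \<le> (V - 1) * int a^2" by simp
      then have "int a^2 \<le> U^2" using e1 by simp
      moreover have "U^2 < T" unfolding T_def using V2 by simp
      moreover have "int a \<le> int a^2" using ha by (simp add: power2_eq_square)
      moreover have "1 \<le> int a" using ha by simp
      ultimately have False using U0T
      proof (cases "U = 0")
        case True
        then show False using \<open>int a^2 \<le> U^2\<close> \<open>int a \<le> int a^2\<close> \<open>1 \<le> int a\<close> by simp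
      next
        case False
        then have "T < int a" using U0T by simp
        then show False using \<open>int a^2 \<le> U^2\<close> \<open>int a \<le> int a^2\<close> \<open>U^2 < T\<close> by linarith
      qed
      then show ?thesis ..
    next
      case False
      then have alb: "a < b" using ab by simp
      have "int (divisor_sigma 2 n) = 1 + int a^2 + int b^2 + int n^2" using ds_pq_sum[OF pa pb alb] nab by simp
      then have eqab: "int a^2 + int b^2 = V * int a * int b - U^2" using sig nab by simp
      have U0: "U \<noteq> 0"
      proof
        assume "U = 0"
        then show False using U0a False by simp
      qed
      have F: "(\<exists>k. (int a = lucasU P (-1) (2*k+1) \<and> int b = lucasU P (-1) (2*k+2*m+1))
            \<or> (int b = lucasU P (-1) (2*k+1) \<and> int a = lucasU P (-1) (2*k+2*m+1)))
       \<or> (\<exists>k. k \<le> m - 1 \<and> m \<ge> 1 \<and> m \<noteq> 2*k+1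
            \<and> int a = lucasU P (-1) (2*k+1) \<and> int b = lucasU P (-1) (2*m-2*k-1))"
        using fin[OF P0 _ alb] U0 eqab unfolding U_def V_def by blast
      have pai: "prime (int a)" "prime (int b)" using pa pb by simp_all
      have ni: "int n = int a * int b" using nab by simp
      show ?thesis
      proof (rule disjE[OF F])
        assume "\<exists>k. (int a = lucasU P (-1) (2*k+1) \<and> int b = lucasU P (-1) (2*k+2*m+1))
            \<or> (int b = lucasU P (-1) (2*k+1) \<and> int a = lucasU P (-1) (2*k+2*m+1))"
        then obtain k where "(int a = lucasU P (-1) (2*k+1) \<and> int b = lucasU P (-1) (2*k+2*m+1))
            \<or> (int b = lucasU P (-1) (2*k+1) \<and> int a = lucasU P (-1) (2*k+2*m+1))" by blast
        then have "int n = lucasU P (-1) (2*k+1) * lucasU P (-1) (2*k+2*m+1)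
            \<and> prime (lucasU P (-1) (2*k+1)) \<and> prime (lucasU P (-1) (2*k+2*m+1))"
        proof (elim disjE conjE)
          assume "int a = lucasU P (-1) (2*k+1)" "int b = lucasU P (-1) (2*k+2*m+1)"
          then show ?thesis using ni pai by simp
        next
          assume "int b = lucasU P (-1) (2*k+1)" "int a = lucasU P (-1) (2*k+2*m+1)"
          then show ?thesis using ni pai by (simp add: mult.commute)
        qed
        then show ?thesis by blast
      next
        assume "\<exists>k. k \<le> m - 1 \<and> m \<ge> 1 \<and> m \<noteq> 2*k+1
            \<and> int a = lucasU P (-1) (2*k+1) \<and> int b = lucasU P (-1) (2*m-2*k-1)"
        then obtain k where "k \<le> m - 1 \<and> m \<ge> 1 \<and> m \<noteq> 2*k+1
            \<and> int a = lucasU P (-1) (2*k+1) \<and> int b = lucasU P (-1) (2*m-2*k-1)" by blast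
        then show ?thesis using ni pai by metis
      qed
    qed
  qed
qed


theorem theorem1p3:
  fixes P :: int and m n :: nat
  assumes "n > 0"
    and "int (divisor_sigma 2 n) - int n ^ 2
           = lucasV P (-1) (2*m) * int n - (lucasU P (-1) (2*m))^2 + 1"
    and "int n > (\<bar>lucasV P (-1) (2*m)\<bar> + (lucasU P (-1) (2*m))^2 - 1) ^ 3"
  shows "(\<exists>k::nat. int n = lucasU P (-1) (2*k+1) * lucasU P (-1) (2*k+2*m+1)
            \<and> prime (lucasU P (-1) (2*k+1)) \<and> prime (lucasU P (-1) (2*k+2*m+1)))
       \<or> (\<exists>k::nat. k \<le> m - 1 \<and> m \<ge> 1 \<and> m \<noteq> 2*k+1
            \<and> int n = lucasU P (-1) (2*k+1) * lucasU P (-1) (2*m-2*k-1)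
            \<and> prime (lucasU P (-1) (2*k+1)) \<and> prime (lucasU P (-1) (2*m-2*k-1)))"
proof (cases "P \<ge> 0")
  case True
  then show ?thesis using main_pos[OF True assms] by blast
next
  case False
  then have Q0: "-P \<ge> 0" by simp
  have ev: "lucasV (-P) (-1) (2*m) = lucasV P (-1) (2*m)"
    "(lucasU (-P) (-1) (2*m))^2 = (lucasU P (-1) (2*m))^2"
    using even_neg[of "2*m" P] by auto
  have od: "\<And>i. odd i \<Longrightarrow> lucasU (-P) (-1) i = lucasU P (-1) i" by (rule odd_neg)
  have M: "(\<exists>k::nat. int n = lucasU (-P) (-1) (2*k+1) * lucasU (-P) (-1) (2*k+2*m+1)
            \<and> prime (lucasU (-P) (-1) (2*k+1)) \<and> prime (lucasU (-P) (-1) (2*k+2*m+1)))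
       \<or> (\<exists>k::nat. k \<le> m - 1 \<and> m \<ge> 1 \<and> m \<noteq> 2*k+1
            \<and> int n = lucasU (-P) (-1) (2*k+1) * lucasU (-P) (-1) (2*m-2*k-1)
            \<and> prime (lucasU (-P) (-1) (2*k+1)) \<and> prime (lucasU (-P) (-1) (2*m-2*k-1)))"
  proof -
    have h2: "int (divisor_sigma 2 n) - int n ^ 2
           = lucasV (-P) (-1) (2*m) * int n - (lucasU (-P) (-1) (2*m))^2 + 1" using assms(2) ev by simp
    have h3: "int n > (\<bar>lucasV (-P) (-1) (2*m)\<bar> + (lucasU (-P) (-1) (2*m))^2 - 1) ^ 3" using assms(3) ev by simp
    show ?thesis using main_pos[OF Q0 assms(1) h2 h3] .
  qed
  show ?thesis
  proof (rule disjE[OF M])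
    assume "\<exists>k::nat. int n = lucasU (-P) (-1) (2*k+1) * lucasU (-P) (-1) (2*k+2*m+1)
            \<and> prime (lucasU (-P) (-1) (2*k+1)) \<and> prime (lucasU (-P) (-1) (2*k+2*m+1))"
    then obtain k where k: "int n = lucasU (-P) (-1) (2*k+1) * lucasU (-P) (-1) (2*k+2*m+1)
            \<and> prime (lucasU (-P) (-1) (2*k+1)) \<and> prime (lucasU (-P) (-1) (2*k+2*m+1))" by blast
    have "odd (2*k+1)" "odd (2*k+2*m+1)" by simp_all
    then have "lucasU (-P) (-1) (2*k+1) = lucasU P (-1) (2*k+1)"
      "lucasU (-P) (-1) (2*k+2*m+1) = lucasU P (-1) (2*k+2*m+1)" using od by blast+
    then show ?thesis using k by auto
  next
    assume "\<exists>k::nat. k \<le> m - 1 \<and> m \<ge> 1 \<and> m \<noteq> 2*k+1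
            \<and> int n = lucasU (-P) (-1) (2*k+1) * lucasU (-P) (-1) (2*m-2*k-1)
            \<and> prime (lucasU (-P) (-1) (2*k+1)) \<and> prime (lucasU (-P) (-1) (2*m-2*k-1))"
    then obtain k where k: "k \<le> m - 1 \<and> m \<ge> 1 \<and> m \<noteq> 2*k+1
            \<and> int n = lucasU (-P) (-1) (2*k+1) * lucasU (-P) (-1) (2*m-2*k-1)
            \<and> prime (lucasU (-P) (-1) (2*k+1)) \<and> prime (lucasU (-P) (-1) (2*m-2*k-1))" by blast
    have "2*m-2*k-1 = 2*(m-k-1)+1" using k by auto
    then have "odd (2*k+1)" "odd (2*m-2*k-1)" by simp_all
    then have "lucasU (-P) (-1) (2*k+1) = lucasU P (-1) (2*k+1)"
      "lucasU (-P) (-1) (2*m-2*k-1) = lucasU P (-1) (2*m-2*k-1)" using od by blast+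
    then show ?thesis using k by auto
  qed
qed

end
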